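(* For every $\beta\in(0,1)$ there exist a probability measure $\mu$ on $\Omega=[0,1]$ (with the metric $\rho(x,y)=|x-y|$), a function $f:[0,1]\to[0,1]$ and $L<\infty$ such that: (i) $f\in\overline{\mathrm{H\ddot{o}l}}^\beta_L(\Omega,\mu)$; (ii) for every $M>0$, $f\notin\mathrm{H\ddot{o}l}^\beta_M(\Omega)$; (iii) for every $M>0$, $f\notin\widetilde{\mathrm{Lip}}_M(\Omega,\mu)$. (For instance $f=\mathbf{1}[x>1/2]$ and $d\mu/dx\propto|x-1/2|^{(\beta-1)/2}$.)
   Context: For $f:\Omega\to\mathbb{R}$ and $\beta\in(0,1]$, $\Lambda_f^\beta(x):=\sup_{y\ne x}\frac{|f(x)-f(y)|}{\rho(x,y)^\beta}$, $\|f\|_{\mathrm{H\ddot{o}l}^\beta}:=\sup_x\Lambda_f^\beta(x)$, $\overline{\Lambda}_f^\beta(\mu):=\mathbb{E}_{X\sim\mu}\Lambda_f^\beta(X)$, $\widetilde{\Lambda}_f^\beta(\mu):=\sup_{t>0}t\,\mu(\{x:\Lambda_f^\beta(x)\ge t\})$. $\mathrm{H\ddot{o}l}^\beta_M(\Omega):=\{f:\Omega\to[0,1]:\|f\|_{\mathrm{H\ddot{o}l}^\beta}\le M\}$, $\overline{\mathrm{H\ddot{o}l}}^\beta_L(\Omega,\mu):=\{f:\Omega\to[0,1]:\overline{\Lambda}_f^\beta(\mu)\le L\}$, and $\widetilde{\mathrm{Lip}}_M(\Omega,\mu):=\{f:\Omega\to[0,1]:\widetilde{\Lambda}_f^1(\mu)\le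 M\}$. *)

theory Defs
  imports "HOL-Analysis.Analysis" "HOL-Probability.Probability"
begin

definition hol_const :: "'a::metric_space set \<Rightarrow> real \<Rightarrow> ('a \<Rightarrow> real) \<Rightarrow> 'a \<Rightarrow> ennreal" where
  "hol_const \<Omega> b f x = (SUP y\<in>\<Omega> - {x}. ennreal (\<bar>f x - f y\<bar> / dist x y powr b))"

definition Hol :: "real \<Rightarrow> real \<Rightarrow> 'a::metric_space set \<Rightarrow> ('a \<Rightarrow> real) set" where
  "Hol b M \<Omega> = {f. f ` \<Omega> \<subseteq> {0..1} \<and> (SUP x\<in>\<Omega>. hol_const \<Omega> b f x) \<le> ennreal M}"

definition avgHol :: "real \<Rightarrow> real \<Rightarrow> 'a::metric_space set \<Rightarrow> 'a measure \<Rightarrow> ('a \<Rightarrow> real) set" where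
  "avgHol b L \<Omega> \<mu> = {f. f ` \<Omega> \<subseteq> {0..1} \<and> (\<integral>\<^sup>+ x. hol_const \<Omega> b f x \<partial>\<mu>) \<le> ennreal L}"

definition weakLip :: "real \<Rightarrow> 'a::metric_space set \<Rightarrow> 'a measure \<Rightarrow> ('a \<Rightarrow> real) set" where
  "weakLip M \<Omega> \<mu> = {f. f ` \<Omega> \<subseteq> {0..1} \<and>
     (SUP t\<in>{0<..}. ennreal t * emeasure \<mu> {x \<in> space \<mu>. ennreal t \<le> hol_const \<Omega> 1 f x}) \<le> ennreal M}"

end

theory Submission
  imports Defs
begin

definition ff :: "real \<Rightarrow> real" where "ff x = (if x = 1/2 then 1 else 0)"

lemma hc_gen:
  assumes "x \<in> {0..1}" "x \<noteq> 1/2"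
  shows "hol_const {0..1} b ff x = ennreal (1 / \<bar>x - 1/2\<bar> powr b)"
proof (rule antisym)
  show "hol_const {0..1} b ff x \<le> ennreal (1 / \<bar>x - 1/2\<bar> powr b)"
    unfolding hol_const_def
  proof (rule SUP_least)
    fix y assume y: "y \<in> {0..1::real} - {x}"
    show "ennreal (\<bar>ff x - ff y\<bar> / dist x y powr b) \<le> ennreal (1 / \<bar>x - 1/2\<bar> powr b)"
    proof (cases "y = 1/2")
      case True then show ?thesis using assms by (simp add: True ff_def dist_real_def)
    next
      case False then show ?thesis using assms by (simp add: ff_def)
    qed
  qed
  show "ennreal (1 / \<bar>x - 1/2\<bar> powr b) \<le> hol_const {0..1} b ff x"
    unfolding hol_const_def
    by (rule SUP_upper2[where i="1/2"]) (use assms in \<open>auto simp: ff_def dist_real_def\<close>)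
qed

lemma hc_half:
  assumes "b > 0"
  shows "hol_const {0..1} b ff (1/2) = \<infinity>"
proof -
have "(SUP y\<in>{0..1} - {1 / 2}. ennreal (\<bar>ff (1/2) - ff y\<bar> / dist (1/2) y powr b)) = top"
proof (rule ennreal_SUP_eq_top)
  fix n :: nat
  define d where "d = (1 / (real n + 1)) powr (1/b) / 2"
  have d0: "d > 0" unfolding d_def by simp
  have "(1 / (real n + 1)) powr (1/b) \<le> 1"
    using assms by (intro powr_le1) auto
  then have d1: "d \<le> 1/2" unfolding d_def by simp
  have "d powr b = (1 / (real n + 1)) * (1/2) powr b"
    unfolding d_def using assms by (simp add: powr_divide powr_powr powr_mult)
  also have "\<dots> \<le> 1 / (real n + 1)"
    using assms by (intro mult_left_le) (auto intro: powr_le1)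
  finally have dp: "d powr b \<le> 1 / (real n + 1)" .
  have "real n \<le> 1 / d powr b"
  proof -
    have "d powr b > 0" using d0 by simp
    with dp have "real n + 1 \<le> 1 / d powr b"
      by (simp add: field_simps)
    then show ?thesis by simp
  qed
  then show "\<exists>y\<in>{0..1} - {1 / 2}. of_nat n \<le> ennreal (\<bar>ff (1/2) - ff y\<bar> / dist (1/2) y powr b)"
    using d0 d1
    by (intro bexI[where x="1/2 + d"]) (auto simp: ff_def dist_real_def ennreal_of_nat_eq_real_of_nat)
qed
then show ?thesis unfolding hol_const_def by simp
qed

lemma ff_meas:
  assumes "b > 0"
  shows "hol_const {0..1} b ff \<in> borel_measurable (restrict_space borel {0..1})"
proof -
  let ?g = "\<lambda>x::real. if x = 1/2 then \<infinity> else ennreal (1 / \<bar>x - 1/2\<bar> powr b)"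
  have "?g \<in> borel_measurable borel" by measurable
  then have "?g \<in> borel_measurable (restrict_space borel {0..1})"
    by (rule measurable_restrict_space1)
  moreover have "?g x = hol_const {0..1} b ff x" if "x \<in> {0..1}" for x
  proof (cases "x = 1/2")
    case True show ?thesis unfolding True using hc_half[OF assms] by simp
  next
    case False then show ?thesis using that by (simp add: hc_gen)
  qed
  ultimately show ?thesis
    by (subst measurable_cong[symmetric]) (auto simp: space_restrict_space)
qed

lemma rp: "r > 0 \<Longrightarrow> (r ^ k) powr (b::real) = (r powr b) ^ k"
  by (simp add: powr_realpow[symmetric] powr_powr powr_power mult.commute)

theorem mainTheorem7:
  fixes \<beta> :: real
  assumes "0 < \<beta>" and "\<beta> < 1"
  shows "\<exists>(\<mu>::real measure) (f::real \<Rightarrow> real) (L::real).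
           prob_space \<mu> \<and> space \<mu> = {0..1} \<and> sets \<mu> = sets (restrict_space borel {0..1::real}) \<and>
           f ` {0..1} \<subseteq> {0..1} \<and>
           hol_const {0..1} \<beta> f \<in> borel_measurable \<mu> \<and>
           hol_const {0..1} 1 f \<in> borel_measurable \<mu> \<and>
           f \<in> avgHol \<beta> L {0..1} \<mu> \<and>
           (\<forall>M>0. f \<notin> Hol \<beta> M {0..1}) \<and>
           (\<forall>M>0. f \<notin> weakLip M {0..1} \<mu>)"
proof -
  define s where "s = (1 + 1/\<beta>) / 2"
  define r where "r = (2::real) powr (-s)"
  define X where "X n = 1/2 + r ^ Suc n" for n
  define P where "P = geometric_pmf (1/2)"
  define N where "N = restrict_space borel {0..1::real}"
  define \<mu> where "\<mu> = distr (measure_pmf P) N X"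
  define q where "q = (1/2) / r powr \<beta>"
  have s1: "s > 1" using assms unfolding s_def by (simp add: field_simps)
  have sb: "s * \<beta> < 1" using assms unfolding s_def by (simp add: field_simps)
  have r0: "r > 0" unfolding r_def by simp
  have r2: "r < 1/2"
  proof -
    have "r < 2 powr (-1)" unfolding r_def using s1 by (intro powr_less_mono) auto
    then show ?thesis by (simp add: powr_minus)
  qed
  have rb: "r powr \<beta> > 1/2"
  proof -
    have "r powr \<beta> = 2 powr (- s * \<beta>)" unfolding r_def by (simp add: powr_powr)
    moreover have "2 powr (-1) < (2::real) powr (- s * \<beta>)" using sb by (intro powr_less_mono) auto
    ultimately show ?thesis by (simp add: powr_minus)
  qed
  have q0: "q > 0" and q1: "q < 1" unfolding q_def using rb r0 by (auto simp: field_simps)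
  have X01: "X n \<in> {0..1}" for n
  proof -
    have "r ^ Suc n \<le> r" using r0 r2 by (simp add: power_le_one mult_left_le)
    moreover have "0 \<le> r ^ Suc n" using r0 by simp
    ultimately show ?thesis unfolding X_def atLeastAtMost_iff using r2 by linarith
  qed
  have Xh: "X n \<noteq> 1/2" for n unfolding X_def using r0 by simp
  have hX: "hol_const {0..1} b ff (X n) = ennreal ((1 / r powr b) ^ Suc n)" for b n
  proof -
    have "hol_const {0..1} b ff (X n) = ennreal (1 / \<bar>X n - 1/2\<bar> powr b)"
      using X01[of n] Xh[of n] by (rule hc_gen)
    also have "\<bar>X n - 1/2\<bar> = r ^ Suc n" unfolding X_def using r0 by simp
    also have "ennreal (1 / (r ^ Suc n) powr b) = ennreal ((1 / r powr b) ^ Suc n)"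
      by (simp only: rp[OF r0] power_one_over)
    finally show ?thesis .
  qed
  have XN: "X \<in> measurable (measure_pmf P) N"
    using X01 unfolding N_def by (simp add: space_restrict_space)
  have sp: "space \<mu> = {0..1}" unfolding \<mu>_def N_def by (simp add: space_restrict_space)
  have ss: "sets \<mu> = sets N" unfolding \<mu>_def by simp
  have ps: "prob_space \<mu>" unfolding \<mu>_def
    by (intro prob_space.prob_space_distr measure_pmf.prob_space_axioms XN)
  have mb: "hol_const {0..1} \<beta> ff \<in> borel_measurable \<mu>"
    using ff_meas[OF assms(1)] unfolding N_def by (simp add: measurable_cong_sets[OF ss refl] N_def)
  have m1: "hol_const {0..1} 1 ff \<in> borel_measurable \<mu>"
    using ff_meas[of 1] unfolding N_def by (simp add: measurable_cong_sets[OF ss refl] N_def)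
  have ffr: "ff ` {0..1} \<subseteq> {0..1}" by (auto simp: ff_def)
  have pP: "pmf P n = (1 - 1/2)^n * (1/2)" for n unfolding P_def by simp
  define L where "L = (\<Sum>n. q ^ Suc n)"
  have summ: "summable (\<lambda>n. q ^ Suc n)"
    using q0 q1 by (simp add: summable_mult)
  have "(\<integral>\<^sup>+ x. hol_const {0..1} \<beta> ff x \<partial>\<mu>) = (\<integral>\<^sup>+ n. hol_const {0..1} \<beta> ff (X n) \<partial>measure_pmf P)"
    using nn_integral_distr[OF XN mb[unfolded \<mu>_def]] unfolding \<mu>_def .
  also have "\<dots> = (\<Sum>n. ennreal (q ^ Suc n))"
  proof -
    have "ennreal (pmf P n) * hol_const {0..1} \<beta> ff (X n) = ennreal (q ^ Suc n)" for n
      unfolding pP hX q_def using rb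
      by (simp add: ennreal_mult[symmetric] power_divide del: power_Suc) (simp add: field_simps)
    then show ?thesis by (simp add: nn_integral_measure_pmf nn_integral_count_space_nat)
  qed
  also have "\<dots> = ennreal L" unfolding L_def using q0 summ by (intro suminf_ennreal2) auto
  finally have avg: "ff \<in> avgHol \<beta> L {0..1} \<mu>" using ffr unfolding avgHol_def by simp
  have nh: "ff \<notin> Hol \<beta> M {0..1}" for M
  proof
    assume "ff \<in> Hol \<beta> M {0..1}"
    then have "(SUP x\<in>{0..1}. hol_const {0..1} \<beta> ff x) \<le> ennreal M" unfolding Hol_def by simp
    moreover have "hol_const {0..1} \<beta> ff (1/2) \<le> (SUP x\<in>{0..1}. hol_const {0..1} \<beta> ff x)"
      by (rule SUP_upper) auto
    ultimately have "hol_const {0..1} \<beta> ff (1/2) \<le> ennreal M" by (rule order_trans[rotated])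
    then show False using hc_half[OF assms(1)] by (simp add: top_unique)
  qed
  have nw: "ff \<notin> weakLip M {0..1} \<mu>" if M0: "M > 0" for M
  proof
    assume "ff \<in> weakLip M {0..1} \<mu>"
    then have W: "(SUP t\<in>{0<..}. ennreal t * emeasure \<mu> {x \<in> space \<mu>. ennreal t \<le> hol_const {0..1} 1 ff x}) \<le> ennreal M"
      unfolding weakLip_def by simp
    define c where "c = 1 / (2 * r)"
    have c1: "c > 1" unfolding c_def using r0 r2 by (simp add: field_simps)
    obtain k where k: "M < c ^ k" using real_arch_pow[OF c1] by blast
    have kk: "M < c ^ Suc k" proof -
      have "c ^ k \<le> c ^ Suc k" by (rule power_increasing) (use c1 in auto)
      then show ?thesis using k by linarith
    qed
    define t where "t = (1 / r) ^ Suc k"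
    have t0: "t > 0" unfolding t_def using r0 by simp
    define S where "S = {x \<in> space \<mu>. ennreal t \<le> hol_const {0..1} 1 ff x}"
    have Sm: "S \<in> sets \<mu>" unfolding S_def using m1 by (intro borel_measurable_le) auto
    have "X k \<in> S" unfolding S_def t_def sp using X01 hX[of 1 k] r0 by simp
    have "ennreal (pmf P k) = emeasure (measure_pmf P) {k}" by (simp add: emeasure_pmf_single)
    also have "\<dots> \<le> emeasure (measure_pmf P) (X -` S \<inter> space (measure_pmf P))"
      using \<open>X k \<in> S\<close> by (intro emeasure_mono) auto
    also have "\<dots> = emeasure \<mu> S" unfolding \<mu>_def using Sm ss XN by (simp add: emeasure_distr)
    finally have "ennreal t * ennreal (pmf P k) \<le> ennreal t * emeasure \<mu> S" by (rule mult_left_mono) simp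
    moreover have "ennreal t * ennreal (pmf P k) = ennreal (c ^ Suc k)"
      unfolding pP t_def c_def using r0
      by (simp add: ennreal_mult[symmetric] power_divide del: power_Suc) (simp add: field_simps)
    moreover have "ennreal t * emeasure \<mu> S \<le> ennreal M"
      using W t0 unfolding S_def by (meson SUP_upper greaterThan_iff order_trans)
    ultimately have "ennreal (c ^ Suc k) \<le> ennreal M" by simp
    then show False using kk M0 by simp
  qed
  show ?thesis
    by (rule exI[of _ \<mu>], rule exI[of _ ff], rule exI[of _ L])
       (use ps sp ss ffr mb m1 avg nh nw in \<open>auto simp: N_def\<close>)
qed

end
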